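(* Let $f(z)=e^z$. If $U,V\subset\mathbb{C}$ are nonempty and open, then there exists $n\geq 0$ such that $f^n(U)\cap V\neq\emptyset$.
   Context: $f^n$ denotes the $n$-th iterate of $f$. *)

theory Defs
  imports "HOL-Analysis.Analysis"
begin

end

theory Submission
  imports Defs "HOL-Complex_Analysis.Complex_Analysis"
begin


lemma iter_deriv:
  "(((exp::complex\<Rightarrow>complex)^^m) has_field_derivative (\<Prod>k<m. (exp^^(Suc k)) z)) (at z)"
proof (induction m)
  case 0
  then show ?case by (simp add: id_def DERIV_ident)
next
  case (Suc m)
  have "((exp \<circ> (exp^^m)) has_field_derivative exp ((exp^^m) z) * (\<Prod>k<m. (exp^^(Suc k)) z)) (at z)"
    by (rule DERIV_chain[OF DERIV_exp Suc])
  then show ?case by (simp add: o_def mult.commute)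
qed

lemma open_iter: "open S \<Longrightarrow> open (((exp::complex\<Rightarrow>complex)^^m) ` S)"
proof (induction m arbitrary: S)
  case 0 then show ?case by simp
next
  case (Suc m)
  have "open (exp ` S)"
  proof (rule open_mapping_thm[of exp UNIV])
    show "exp holomorphic_on UNIV" by (simp add: holomorphic_on_exp)
    show "\<not> exp constant_on (UNIV::complex set)"
    proof
      assume "exp constant_on (UNIV::complex set)"
      then obtain y where "\<And>x::complex. exp x = y" unfolding constant_on_def by blast
      then have "exp (0::complex) = exp (ln 2)" by metis
      then show False by simp
    qed
  qed (use Suc in auto)
  then have "open ((exp^^m) ` (exp ` S))" by (rule Suc.IH)
  then show ?case by (simp add: funpow_Suc_right image_comp del: funpow.simps)
qed

lemma exp_ball:
  fixes t r :: real
  assumes "0 < r" "r \<le> 1"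
  shows "ball (of_real (exp t) :: complex) (exp t * r / 2) \<subseteq> exp ` ball (of_real t :: complex) r"
proof
  fix w :: complex assume w: "w \<in> ball (of_real (exp t)) (exp t * r / 2)"
  define u where "u = w / of_real (exp t) - 1"
  have et: "(of_real (exp t) :: complex) \<noteq> 0" by simp
  have "norm u = norm (w - of_real (exp t)) / exp t"
  proof -
    have "u = (w - of_real (exp t)) / of_real (exp t)" unfolding u_def using et by (simp add: field_simps)
    then show ?thesis by (simp add: norm_divide)
  qed
  also have "\<dots> < r/2" using w by (simp add: dist_norm norm_minus_commute divide_less_eq mult.commute)
  finally have u: "norm u < r/2" .
  then have u1: "norm u < 1" "norm u \<le> 1/2" using assms by auto
  have nz: "1 + u \<noteq> 0" using u1 by (metis add.inverse_unique norm_minus_cancel norm_one order_less_irrefl)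
  have "norm (ln (1+u) - u) \<le> norm u ^2 / (1 - norm u)" by (rule Ln_approx_linear[OF u1(1)])
  also have "\<dots> \<le> norm u"
  proof -
    have "norm u * norm u \<le> (1/2) * norm u" using mult_right_mono[OF u1(2), of "norm u"] by simp
    then show ?thesis using u1 by (simp add: divide_le_eq power2_eq_square algebra_simps)
  qed
  finally have "norm (ln (1+u)) \<le> 2 * norm u" by (metis norm_triangle_ineq2 mult_2 add_le_cancel_right order_trans diff_le_eq)
  then have lt: "norm (ln (1+u)) < r" using u by linarith
  have "exp (of_real t + ln (1+u)) = w"
    using nz et by (simp add: exp_add u_def exp_of_real)
  moreover have "of_real t + ln (1+u) \<in> ball (of_real t) r" using lt by (simp add: dist_norm)
  ultimately show "w \<in> exp ` ball (of_real t) r" by (metis image_eqI)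
qed



lemma iter_image_Suc: "((exp::complex\<Rightarrow>complex)^^k) ` (exp ` S) = (exp^^(Suc k)) ` S"
  by (simp add: funpow_Suc_right image_comp del: funpow.simps)

lemma exp2_ge4: "(4::real) \<le> exp 2"
proof -
  have "exp (1::real) \<ge> 2" using exp_ge_add_one_self[of "1::real"] by simp
  then have "exp 1 * exp 1 \<ge> (2::real) * 2" by (intro mult_mono) auto
  then show ?thesis by (simp add: exp_add[symmetric])
qed

lemma reach_ge2:
  "\<forall>x r. 0 < r \<longrightarrow> x \<ge> 2 - real N \<longrightarrow>
     (\<exists>k x' r'. x' \<ge> 2 \<and> r' > 0 \<and> ball (of_real x' :: complex) r' \<subseteq> (exp^^k) ` ball (of_real x) r)"
proof (induction N)
  case 0
  show ?case
  proof (intro allI impI)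
    fix x r :: real assume "0 < r" "x \<ge> 2 - real 0"
    then show "\<exists>k x' r'. x' \<ge> 2 \<and> r' > 0 \<and> ball (of_real x' :: complex) r' \<subseteq> (exp^^k) ` ball (of_real x) r"
      by (intro exI[of _ 0] exI[of _ x] exI[of _ r]) auto
  qed
next
  case (Suc N)
  show ?case
  proof (intro allI impI)
    fix x r :: real assume r: "0 < r" and x: "x \<ge> 2 - real (Suc N)"
    define r0 where "r0 = min r 1"
    have r0: "0 < r0" "r0 \<le> 1" "r0 \<le> r" using r by (auto simp: r0_def)
    have "ball (of_real (exp x) :: complex) (exp x * r0 / 2) \<subseteq> exp ` ball (of_real x) r0"
      by (rule exp_ball[OF r0(1,2)])
    also have "\<dots> \<subseteq> exp ` ball (of_real x) r" using r0 by (intro image_mono) auto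
    finally have sub: "ball (of_real (exp x) :: complex) (exp x * r0 / 2) \<subseteq> exp ` ball (of_real x) r" .
    have "exp x \<ge> 2 - real N" using exp_ge_add_one_self[of x] x by linarith
    moreover have "exp x * r0 / 2 > 0" using r0 by simp
    ultimately obtain k x' r' where k: "x' \<ge> 2" "r' > 0"
      "ball (of_real x' :: complex) r' \<subseteq> (exp^^k) ` ball (of_real (exp x)) (exp x * r0 / 2)"
      using Suc.IH by blast
    note k(3)
    also have "(exp^^k) ` ball (of_real (exp x) :: complex) (exp x * r0 / 2) \<subseteq> (exp^^k) ` (exp ` ball (of_real x) r)" using sub by (intro image_mono)
    also have "\<dots> = (exp^^(Suc k)) ` ball (of_real x) r" by (rule iter_image_Suc)
    finally show "\<exists>k x' r'. x' \<ge> 2 \<and> r' > 0 \<and> ball (of_real x' :: complex) r' \<subseteq> (exp^^k) ` ball (of_real x) r"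
      using k by blast
  qed
qed

lemma reach_r1:
  "\<forall>x r. x \<ge> 2 \<longrightarrow> 0 < r \<longrightarrow> r \<ge> (1/2)^N \<longrightarrow>
     (\<exists>k x'. x' \<ge> x \<and> ball (of_real x' :: complex) 1 \<subseteq> (exp^^k) ` ball (of_real x) r)"
proof (induction N)
  case 0
  show ?case
  proof (intro allI impI)
    fix x r :: real assume "r \<ge> (1/2)^0"
    then have "ball (of_real x :: complex) 1 \<subseteq> (exp^^0) ` ball (of_real x) r" by auto
    then show "\<exists>k x'. x' \<ge> x \<and> ball (of_real x' :: complex) 1 \<subseteq> (exp^^k) ` ball (of_real x) r"
      by blast
  qed
next
  case (Suc N)
  show ?case
  proof (intro allI impI)
    fix x r :: real assume x: "x \<ge> 2" and r: "0 < r" and rN: "r \<ge> (1/2)^Suc N"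
    show "\<exists>k x'. x' \<ge> x \<and> ball (of_real x' :: complex) 1 \<subseteq> (exp^^k) ` ball (of_real x) r"
    proof (cases "r \<ge> 1")
      case True
      then have "ball (of_real x :: complex) 1 \<subseteq> (exp^^0) ` ball (of_real x) r" by auto
      then show ?thesis by blast
    next
      case False
      have e4: "exp x \<ge> 4" using exp2_ge4 x by (meson exp_le_cancel_iff order_trans)
      have "ball (of_real (exp x) :: complex) (2*r) \<subseteq> ball (of_real (exp x)) (exp x * r / 2)"
        using e4 r by (intro subset_ball) (simp add: field_simps)
      also have "\<dots> \<subseteq> exp ` ball (of_real x) r" using False r by (intro exp_ball) auto
      finally have sub: "ball (of_real (exp x) :: complex) (2*r) \<subseteq> exp ` ball (of_real x) r" .
      have ex: "exp x \<ge> x" "exp x \<ge> 2" using exp_ge_add_one_self[of x] x by linarith+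
      have "2*r \<ge> (1/2)^N" using rN by simp
      then obtain k x' where k: "x' \<ge> exp x"
        "ball (of_real x' :: complex) 1 \<subseteq> (exp^^k) ` ball (of_real (exp x)) (2*r)"
        using Suc.IH ex r by (metis mult_pos_pos zero_less_numeral)
      note k(2)
      also have "(exp^^k) ` ball (of_real (exp x) :: complex) (2*r) \<subseteq> (exp^^k) ` (exp ` ball (of_real x) r)"
        using sub by (intro image_mono)
      also have "\<dots> = (exp^^(Suc k)) ` ball (of_real x) r" by (rule iter_image_Suc)
      finally show ?thesis using k(1) ex by (meson order_trans)
    qed
  qed
qed

lemma reach_far:
  "\<forall>x. x \<ge> 2 \<longrightarrow> (\<exists>k x'. x' \<ge> x + real j \<and> ball (of_real x' :: complex) 1 \<subseteq> (exp^^k) ` ball (of_real x) 1)"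
proof (induction j)
  case 0
  show ?case
  proof (intro allI impI)
    fix x :: real assume "x \<ge> 2"
    then show "\<exists>k x'. x' \<ge> x + real 0 \<and> ball (of_real x' :: complex) 1 \<subseteq> (exp^^k) ` ball (of_real x) 1"
      by (intro exI[of _ 0] exI[of _ x]) auto
  qed
next
  case (Suc j)
  show ?case
  proof (intro allI impI)
    fix x :: real assume x: "x \<ge> 2"
    have e4: "exp x \<ge> 4" using exp2_ge4 x by (meson exp_le_cancel_iff order_trans)
    have "ball (of_real (exp x) :: complex) 1 \<subseteq> ball (of_real (exp x)) (exp x * 1 / 2)"
      using e4 by (intro subset_ball) simp
    also have "\<dots> \<subseteq> exp ` ball (of_real x) 1" by (intro exp_ball) auto
    finally have sub: "ball (of_real (exp x) :: complex) 1 \<subseteq> exp ` ball (of_real x) 1" .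
    have ex: "exp x \<ge> x + 1" "exp x \<ge> 2" using exp_ge_add_one_self[of x] x by linarith+
    then obtain k x' where k: "x' \<ge> exp x + real j"
        "ball (of_real x' :: complex) 1 \<subseteq> (exp^^k) ` ball (of_real (exp x)) 1"
      using Suc.IH by blast
    note k(2)
    also have "(exp^^k) ` ball (of_real (exp x) :: complex) 1 \<subseteq> (exp^^k) ` (exp ` ball (of_real x) 1)"
      using sub by (intro image_mono)
    also have "\<dots> = (exp^^(Suc k)) ` ball (of_real x) 1" by (rule iter_image_Suc)
    finally show "\<exists>k x'. x' \<ge> x + real (Suc j) \<and> ball (of_real x' :: complex) 1 \<subseteq> (exp^^k) ` ball (of_real x) 1"
      using k(1) ex by (intro exI[of _ "Suc k"] exI[of _ x']) auto
  qed
qed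



lemma final_step:
  fixes c :: real and v :: complex
  assumes v: "v \<noteq> 0" and big: "2 * (2*pi + norm (ln v)) \<le> exp c"
  shows "v \<in> exp ` exp ` ball (of_real c) 5"
proof -
  define A where "A = exp c"
  define L where "L = ln v"
  define k where "k = nat \<lfloor>A / (2*pi)\<rfloor>"
  have A0: "A > 0" by (simp add: A_def)
  have fl: "real_of_int \<lfloor>A / (2*pi)\<rfloor> \<ge> 0" using A0 by simp
  have k1: "real k \<le> A / (2*pi)" unfolding k_def using fl by linarith
  have k2: "real k > A / (2*pi) - 1" unfolding k_def using fl by linarith
  have k1': "2*pi*real k \<le> A" using k1 pi_gt_zero by (simp add: field_simps)
  have k2': "2*pi*real k > A - 2*pi" using k2 pi_gt_zero by (simp add: field_simps)
  define w where "w = L + \<i> * (of_int (int k) * (of_real pi * 2))"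
  have ew: "exp w = v" unfolding w_def L_def using v exp_plus_2pin[of "ln v" "int k"] by simp
  have nt: "norm (\<i> * (of_int (int k) * (of_real pi * 2) :: complex)) = 2*pi*real k"
    by (simp add: norm_mult)
  have w1: "norm w \<le> norm L + 2*pi*real k" unfolding w_def using norm_triangle_ineq[of L "\<i> * (of_int (int k) * (of_real pi * 2))"] nt by simp
  have w2: "norm w \<ge> 2*pi*real k - norm L" unfolding w_def using norm_triangle_ineq2[of "\<i> * (of_int (int k) * (of_real pi * 2))" "-L"] nt
    by (simp add: add.commute)
  have bigA: "2 * (2*pi + norm L) \<le> A" using big by (simp add: A_def L_def)
  have aux: "A - 2*pi - norm L \<ge> A/2" using bigA by simp
  have wlo: "norm w \<ge> A/2" using w2 k2' aux by linarith
  have aux2: "norm L \<le> A"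
  proof -
    have "4*pi + 2*norm L \<le> A" using bigA by simp
    moreover have "0 \<le> 4*pi" using pi_gt_zero by simp
    moreover have "0 \<le> norm L" by simp
    ultimately show ?thesis by linarith
  qed
  have whi: "norm w \<le> 2*A" using w1 k1' aux2 by linarith
  have wnz: "w \<noteq> 0" using wlo A0 by auto
  have e1: "exp (1::real) \<ge> 2" using exp_ge_add_one_self[of "1::real"] by linarith
  have "exp (c - 1) = A / exp 1" by (simp add: A_def exp_diff)
  also have "\<dots> \<le> A / 2" using e1 A0 by (intro divide_left_mono) auto
  also have "\<dots> \<le> norm w" by (rule wlo)
  finally have lo: "c - 1 \<le> ln (norm w)" using wnz by (metis exp_le_cancel_iff exp_ln zero_less_norm_iff)
  have "norm w \<le> A * 2" using whi by simp
  also have "\<dots> \<le> A * exp 1" using e1 A0 by (intro mult_left_mono) auto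
  also have "\<dots> = exp (c + 1)" by (simp add: A_def exp_add)
  finally have hi: "ln (norm w) \<le> c + 1" using wnz by (metis exp_le_cancel_iff exp_ln zero_less_norm_iff)
  define z where "z = ln w"
  have ez: "exp z = w" unfolding z_def using wnz by simp
  have rez: "Re z = ln (norm w)" unfolding z_def using wnz by (simp add: Re_Ln)
  have imz: "\<bar>Im z\<bar> \<le> pi" unfolding z_def using wnz mpi_less_Im_Ln[of w] Im_Ln_le_pi[of w] by auto
  have "(cmod (z - of_real c))^2 = (Re z - c)^2 + (Im z)^2" by (simp add: cmod_power2)
  also have "\<dots> \<le> 1 + pi^2"
  proof -
    have "\<bar>Re z - c\<bar> \<le> 1" using lo hi rez by auto
    then have "(Re z - c)^2 \<le> 1^2" by (metis abs_le_square_iff abs_one)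
    moreover have "(Im z)^2 \<le> pi^2" using imz by (metis abs_le_square_iff abs_of_pos pi_gt_zero)
    ultimately show ?thesis by simp
  qed
  also have "\<dots> < 5^2"
  proof -
    have "pi * pi \<le> 4 * 4" using mult_mono[OF less_imp_le[OF pi_less_4] less_imp_le[OF pi_less_4]] pi_gt_zero by linarith
    then show ?thesis by (simp add: power2_eq_square)
  qed
  finally have "(cmod (z - of_real c))^2 < 5^2" .
  then have "cmod (z - of_real c) < 5" by (rule power2_less_imp_less) simp
  then have "z \<in> ball (of_real c) 5" by (simp add: dist_norm norm_minus_commute)
  then show ?thesis using ez ew by (metis image_eqI)
qed



lemma from_real:
  fixes x0 r :: real and v :: complex
  assumes v: "v \<noteq> 0" and r: "r > 0"
  shows "\<exists>n. v \<in> (exp^^n) ` ball (of_real x0) r"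
proof -
  obtain N :: nat where N: "x0 \<ge> 2 - real N" by (metis diff_le_eq add.commute real_arch_simple order_trans le_diff_eq)
  obtain k1 x1 r1 where "x1 \<ge> 2" "r1 > 0" and s1: "ball (of_real x1 :: complex) r1 \<subseteq> (exp^^k1) ` ball (of_real x0) r"
    using reach_ge2[of N] N r by blast
  obtain M :: nat where M: "(1/2::real)^M < r1" using real_arch_pow_inv[of r1 "1/2"] \<open>r1 > 0\<close> by auto
  obtain k2 x2 where "x2 \<ge> x1" and s2: "ball (of_real x2 :: complex) 1 \<subseteq> (exp^^k2) ` ball (of_real x1) r1"
    using reach_r1[of M] \<open>x1 \<ge> 2\<close> \<open>r1 > 0\<close> M by fastforce
  have x2: "x2 \<ge> 2" using \<open>x2 \<ge> x1\<close> \<open>x1 \<ge> 2\<close> by simp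
  define T where "T = 4 + 2 * (2*pi + norm (ln v))"
  obtain j :: nat where j: "real j \<ge> T" using real_arch_simple by blast
  obtain k3 x3 where x3: "x3 \<ge> x2 + real j" and s3: "ball (of_real x3 :: complex) 1 \<subseteq> (exp^^k3) ` ball (of_real x2) 1"
    using reach_far[of j] x2 by blast
  have x3T: "x3 \<ge> T" using x3 x2 j by linarith
  have T3: "T \<ge> 4" unfolding T_def using pi_gt_zero by (simp add: algebra_simps add_nonneg_nonneg)
  have e8: "exp x3 \<ge> 10"
  proof -
    have "exp (2::real) * exp 2 \<ge> 4 * 4" using exp2_ge4 by (intro mult_mono) auto
    then have "exp (4::real) \<ge> 10" by (simp add: exp_add[symmetric])
    then show ?thesis using x3T T3 by (meson exp_le_cancel_iff order_trans)
  qed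
  have "ball (of_real (exp x3) :: complex) 5 \<subseteq> ball (of_real (exp x3)) (exp x3 * 1 / 2)"
    using e8 by (intro subset_ball) simp
  also have "\<dots> \<subseteq> exp ` ball (of_real x3) 1" by (intro exp_ball) auto
  finally have s4: "ball (of_real (exp x3) :: complex) 5 \<subseteq> exp ` ball (of_real x3) 1" .
  have "exp (exp x3) \<ge> 1 + exp x3" by (rule exp_ge_add_one_self)
  moreover have "exp x3 \<ge> 1 + x3" by (rule exp_ge_add_one_self)
  ultimately have "2 * (2*pi + norm (ln v)) \<le> exp (exp x3)" using x3T unfolding T_def by linarith
  then have "v \<in> exp ` exp ` ball (of_real (exp x3)) 5" by (rule final_step[OF v])
  also have "\<dots> \<subseteq> exp ` exp ` exp ` ball (of_real x3) 1" using s4 by (intro image_mono)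
  also have "\<dots> \<subseteq> exp ` exp ` exp ` (exp^^k3) ` ball (of_real x2) 1" using s3 by (intro image_mono)
  also have "\<dots> \<subseteq> exp ` exp ` exp ` (exp^^k3) ` (exp^^k2) ` ball (of_real x1) r1" using s2 by (intro image_mono)
  also have "\<dots> \<subseteq> exp ` exp ` exp ` (exp^^k3) ` (exp^^k2) ` (exp^^k1) ` ball (of_real x0) r" using s1 by (intro image_mono)
  also have "\<dots> = (exp^^(3 + k3 + k2 + k1)) ` ball (of_real x0) r"
    by (simp add: image_comp funpow_add numeral_3_eq_3 o_def)
  finally show ?thesis by blast
qed



lemma cos_lb: "cos (t::real) \<ge> 1 - t^2/2"
proof -
  have "\<bar>sin (t/2)\<bar> \<le> \<bar>t/2\<bar>" by (rule abs_sin_x_le_abs_x)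
  then have "(sin (t/2))^2 \<le> (t/2)^2" by (metis abs_le_square_iff)
  moreover have "cos t = 1 - 2 * (sin (t/2))^2" using cos_double_sin[of "t/2"] by simp
  ultimately show ?thesis by (simp add: power_divide)
qed

lemma sin_lb_pos: assumes "0 \<le> (y::real)" "y \<le> 1" shows "sin y \<ge> y/2"
proof -
  have "(\<lambda>t. sin t - t/2) 0 \<le> (\<lambda>t. sin t - t/2) y"
  proof (rule DERIV_nonneg_imp_nondecreasing[OF assms(1)])
    fix x :: real assume x: "0 \<le> x" "x \<le> y"
    have "DERIV (\<lambda>t. sin t - t/2) x :> cos x - 1/2"
      by (auto intro!: derivative_eq_intros)
    moreover have "cos x - 1/2 \<ge> 0"
    proof -
      have "x^2 \<le> 1" using x assms by (simp add: power_le_one)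
      then show ?thesis using cos_lb[of x] by linarith
    qed
    ultimately show "\<exists>d. DERIV (\<lambda>t. sin t - t/2) x :> d \<and> d \<ge> 0" by blast
  qed
  then show ?thesis by simp
qed

lemma sin_lb: assumes "\<bar>y::real\<bar> \<le> 1" shows "\<bar>sin y\<bar> \<ge> \<bar>y\<bar>/2"
proof (cases "y \<ge> 0")
  case True then show ?thesis using sin_lb_pos[of y] assms by auto
next
  case False then show ?thesis using sin_lb_pos[of "-y"] assms by auto
qed

lemma sin_ub_pos: assumes "1/2 \<le> (y::real)" shows "sin y \<le> (199/200) * y"
proof (cases "y \<ge> 101/100")
  case True then show ?thesis using sin_le_one[of y] by linarith
next
  case False
  have c0: "cos (y/2) \<ge> 0" using False assms by (intro cos_ge_zero) (use pi_gt3 in auto)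
  have s0: "sin (y/2) \<le> y/2" using assms by (intro sin_x_le_x) auto
  have "sin y = 2 * sin (y/2) * cos (y/2)" using sin_double[of "y/2"] by simp
  also have "\<dots> \<le> 2 * (y/2) * cos (y/2)" using s0 c0 by (intro mult_right_mono) auto
  also have "\<dots> \<le> y * cos (1/4)"
  proof -
    have "cos (y/2) \<le> cos (1/4)" using assms False pi_gt3 by (subst cos_mono_le_eq) auto
    then show ?thesis using assms by (simp add: mult_left_mono)
  qed
  also have "\<dots> \<le> y * (199/200)"
  proof -
    have "sin (1/8) \<ge> (1/8::real)/2" by (rule sin_lb_pos) auto
    then have "(sin (1/8))^2 \<ge> (1/16::real)^2" by (intro power_mono) auto
    then have "(sin (1/8::real))^2 \<ge> 1/256" by (simp add: power2_eq_square)
    moreover have "cos (1/4::real) = 1 - 2 * (sin (1/8))^2" using cos_double_sin[of "1/8::real"] by simp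
    ultimately have "cos (1/4::real) \<le> 199/200" by linarith
    then show ?thesis using assms by (intro mult_left_mono) auto
  qed
  finally show ?thesis by simp
qed

lemma sin_ub: assumes "\<bar>y::real\<bar> \<ge> 1/2" shows "\<bar>sin y\<bar> \<le> (199/200) * \<bar>y\<bar>"
proof -
  have "sin \<bar>y\<bar> \<le> (199/200) * \<bar>y\<bar>" using sin_ub_pos assms by blast
  moreover have "-(sin \<bar>y\<bar>) \<le> (199/200) * \<bar>y\<bar>"
  proof (cases "\<bar>y\<bar> \<le> 3")
    case True
    then have "sin \<bar>y\<bar> \<ge> 0" using pi_gt3 by (intro sin_ge_zero) auto
    then show ?thesis by simp
  next
    case False then show ?thesis using sin_ge_minus_one[of "\<bar>y\<bar>"] by linarith
  qed
  ultimately show ?thesis by (cases "y \<ge> 0") auto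
qed

lemma exp_lin: "(4/5) * exp (x::real) \<ge> x + 1/2"
proof (cases "x \<le> 3/2")
  case True then show ?thesis using exp_ge_add_one_self[of x] by linarith
next
  case False
  have "exp x = exp (x/2) * exp (x/2)" by (simp add: exp_add[symmetric])
  also have "\<dots> \<ge> (1 + x/2) * (1 + x/2)" using exp_ge_add_one_self[of "x/2"] False
    by (intro mult_mono) auto
  finally have "exp x \<ge> 1 + x + x^2/4" by (simp add: algebra_simps power2_eq_square)
  moreover have "x^2 \<ge> x" using False by (simp add: power2_eq_square)
  ultimately show ?thesis by linarith
qed



fun cnt :: "(nat \<Rightarrow> bool) \<Rightarrow> nat \<Rightarrow> nat" where
  "cnt P 0 = 0" | "cnt P (Suc m) = cnt P m + (if P m then 1 else 0)"

lemma cnt_mono: "m \<le> n \<Longrightarrow> cnt P m \<le> cnt P n"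
  by (rule lift_Suc_mono_le[of "cnt P"]) auto

lemma cnt_big: assumes "\<forall>N. \<exists>k\<ge>N. P k" shows "\<exists>m. P m \<and> cnt P m \<ge> N"
proof (induction N)
  case 0 then show ?case using assms by blast
next
  case (Suc N)
  then obtain m where m: "P m" "cnt P m \<ge> N" by blast
  obtain k where k: "k \<ge> Suc m" "P k" using assms by blast
  have "cnt P k \<ge> cnt P (Suc m)" using k by (intro cnt_mono)
  then show ?case using m k by auto
qed

lemma holo_iter: "((exp::complex\<Rightarrow>complex)^^m) holomorphic_on S"
  unfolding holomorphic_on_def field_differentiable_def
  using iter_deriv has_field_derivative_at_within by blast

lemma deriv_norm: "norm (deriv ((exp::complex\<Rightarrow>complex)^^m) a) = (\<Prod>k<m. exp (Re ((exp^^k) a)))"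
  by (simp add: DERIV_imp_deriv[OF iter_deriv] prod_norm[symmetric])

lemma bloch_bound:
  fixes a :: complex
  assumes s: "s > 0" and H: "\<And>m w. w \<in> ball a s \<Longrightarrow> Im ((exp^^m) w) \<noteq> 0"
  shows "norm (deriv (exp^^m) a) \<le> 24/s"
proof (rule ccontr)
  assume "\<not> ?thesis"
  then have "2 \<le> s * norm (deriv (exp^^m) a) / 12" using s by (simp add: field_simps)
  then obtain b where b: "ball b 2 \<subseteq> (exp^^m) ` ball a s"
    using Bloch[OF holo_iter s] by blast
  define n where "n = round (Im b / pi)"
  define p where "p = Complex (Re b) (pi * of_int n)"
  have "\<bar>of_int n - Im b / pi\<bar> \<le> 1/2" unfolding n_def by (rule of_int_round_abs_le)
  then have "\<bar>pi * of_int n - Im b\<bar> \<le> pi/2" using pi_gt_zero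
    by (simp add: abs_mult[symmetric] field_simps abs_divide)
  then have d: "\<bar>Im b - pi * of_int n\<bar> < 2" using pi_less_4 by linarith
  have "b - p = Complex 0 (Im b - pi * of_int n)" unfolding p_def by (simp add: complex_eq_iff)
  then have "dist b p < 2" using d by (simp add: dist_norm norm_complex_def)
  then have "p \<in> (exp^^m) ` ball a s" using b by auto
  then obtain w where w: "w \<in> ball a s" "p = (exp^^m) w" by auto
  have "sin (of_int n * pi) = 0" by (simp add: sin_times_pi_eq_0)
  then have "Im (exp p) = 0" unfolding p_def by (simp add: Im_exp mult.commute)
  then have "Im ((exp^^(Suc m)) w) = 0" using w by simp
  then show False using H[OF w(1)] by blast
qed

lemma hits_real:
  fixes a :: complex
  assumes s: "s > 0"
  shows "\<exists>m w. w \<in> ball a s \<and> Im ((exp^^m) w) = 0"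
proof (rule ccontr)
  assume "\<not> ?thesis"
  then have H: "\<And>m w. w \<in> ball a s \<Longrightarrow> Im ((exp^^m) w) \<noteq> 0" by blast
  define X where "X k = Re ((exp^^k) a)" for k
  define Y where "Y k = Im ((exp^^k) a)" for k
  have XS: "X (Suc k) = exp (X k) * cos (Y k)" for k by (simp add: X_def Y_def Re_exp)
  have YS: "Y (Suc k) = exp (X k) * sin (Y k)" for k by (simp add: X_def Y_def Im_exp)
  have Ynz: "Y k \<noteq> 0" for k using H[of a k] s by (simp add: Y_def)
  have B: "(\<Prod>k<m. exp (X k)) \<le> 24/s" for m
    using bloch_bound[OF s H, where m=m and a=a] deriv_norm[of m a] by (simp add: X_def)
  define P where "P k = (\<bar>Y k\<bar> \<ge> 1/2)" for k
  define Q :: real where "Q = 200/199"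
  have key: "(\<Prod>k<m. exp (X k)) * \<bar>Y 0\<bar> \<ge> \<bar>Y m\<bar> * Q^(cnt P m)" for m
  proof (induction m)
    case 0 then show ?case by simp
  next
    case (Suc m)
    have ay: "\<bar>Y (Suc m)\<bar> = exp (X m) * \<bar>sin (Y m)\<bar>" by (simp add: YS abs_mult)
    have "(\<Prod>k<Suc m. exp (X k)) * \<bar>Y 0\<bar> = exp (X m) * ((\<Prod>k<m. exp (X k)) * \<bar>Y 0\<bar>)"
      by (simp add: algebra_simps)
    also have "\<dots> \<ge> exp (X m) * (\<bar>Y m\<bar> * Q^(cnt P m))"
      using Suc.IH by (intro mult_left_mono) auto
    finally have L: "(\<Prod>k<Suc m. exp (X k)) * \<bar>Y 0\<bar> \<ge> exp (X m) * (\<bar>Y m\<bar> * Q^(cnt P m))" .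
    show ?case
    proof (cases "P m")
      case True
      then have "\<bar>sin (Y m)\<bar> \<le> (199/200) * \<bar>Y m\<bar>" unfolding P_def by (intro sin_ub) auto
      then have "\<bar>sin (Y m)\<bar> * Q \<le> \<bar>Y m\<bar>" unfolding Q_def by simp
      then have "exp (X m) * (\<bar>sin (Y m)\<bar> * Q) \<le> exp (X m) * \<bar>Y m\<bar>" by (intro mult_left_mono) auto
      then have "\<bar>Y (Suc m)\<bar> * Q^(cnt P (Suc m)) \<le> exp (X m) * \<bar>Y m\<bar> * Q^(cnt P m)"
        using True ay unfolding Q_def by (simp add: algebra_simps mult_right_mono)
      then have A: "\<bar>Y (Suc m)\<bar> * Q^(cnt P (Suc m)) \<le> exp (X m) * (\<bar>Y m\<bar> * Q^(cnt P m))"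
        by (simp only: mult.assoc)
      from A L show ?thesis by (rule order_trans)
    next
      case False
      have "\<bar>sin (Y m)\<bar> \<le> \<bar>Y m\<bar>" by (rule abs_sin_x_le_abs_x)
      then have "\<bar>Y (Suc m)\<bar> \<le> exp (X m) * \<bar>Y m\<bar>" using ay by (simp add: mult_left_mono)
      then have "\<bar>Y (Suc m)\<bar> * Q^(cnt P (Suc m)) \<le> exp (X m) * \<bar>Y m\<bar> * Q^(cnt P m)"
        using False unfolding Q_def by (simp add: mult_right_mono)
      then have A: "\<bar>Y (Suc m)\<bar> * Q^(cnt P (Suc m)) \<le> exp (X m) * (\<bar>Y m\<bar> * Q^(cnt P m))"
        by (simp only: mult.assoc)
      from A L show ?thesis by (rule order_trans)
    qed
  qed
  have inf: "\<forall>N. \<exists>k\<ge>N. P k"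
  proof (rule ccontr)
    assume "\<not> ?thesis"
    then obtain N where NP: "\<And>k. k \<ge> N \<Longrightarrow> \<bar>Y k\<bar> < 1/2" unfolding P_def by (meson not_le)
    have Xinc: "X (Suc k) \<ge> X k + 1/2" if "k \<ge> N" for k
    proof -
      have "(Y k)^2 \<le> (1/2)^2" using NP[OF that] abs_le_square_iff[of "Y k" "1/2"] by simp
      then have "cos (Y k) \<ge> 4/5" using cos_lb[of "Y k"] by (simp add: power2_eq_square)
      then have "exp (X k) * cos (Y k) \<ge> exp (X k) * (4/5)" by (intro mult_left_mono) auto
      then show ?thesis using exp_lin[of "X k"] XS[of k] by linarith
    qed
    have Xlin: "X (N + j) \<ge> X N + real j / 2" for j
    proof (induction j)
      case 0 then show ?case by simp
    next
      case (Suc j) then show ?case using Xinc[of "N + j"] by (simp add: add_divide_distrib)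
    qed
    obtain j :: nat where j: "real j \<ge> 2 * (2 - X N)" using real_arch_simple by blast
    define K where "K = N + j"
    have XK: "X (K + i) \<ge> 2" for i
    proof (induction i)
      case 0 then show ?case using Xlin[of j] j by (simp add: K_def)
    next
      case (Suc i) then show ?case using Xinc[of "K + i"] by (simp add: K_def)
    qed
    have Ygrow: "\<bar>Y (K + i)\<bar> \<ge> 2^i * \<bar>Y K\<bar>" for i
    proof (induction i)
      case 0 then show ?case by simp
    next
      case (Suc i)
      have yl: "\<bar>Y (K+i)\<bar> < 1/2" using NP[of "K+i"] by (simp add: K_def)
      have e4: "exp (X (K+i)) \<ge> 4" using XK[of i] exp2_ge4 by (meson exp_le_cancel_iff order_trans)
      have sl: "\<bar>sin (Y (K+i))\<bar> \<ge> \<bar>Y (K+i)\<bar>/2" using yl by (intro sin_lb) auto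
      have "\<bar>Y (K + Suc i)\<bar> = exp (X (K+i)) * \<bar>sin (Y (K+i))\<bar>" by (simp add: YS abs_mult)
      also have "\<dots> \<ge> 4 * (\<bar>Y (K+i)\<bar>/2)" using e4 sl by (intro mult_mono) auto
      finally show ?case using Suc.IH by simp
    qed
    have yK: "\<bar>Y K\<bar> > 0" using Ynz by simp
    obtain i where i: "1 / (2 * \<bar>Y K\<bar>) < 2^i" using real_arch_pow[of "2::real"] by auto
    then have "1/2 < 2^i * \<bar>Y K\<bar>" using yK by (simp add: field_simps)
    then show False using Ygrow[of i] NP[of "K+i"] by (simp add: K_def)
  qed
  have y0: "\<bar>Y 0\<bar> > 0" using Ynz by simp
  obtain N where N: "48 * \<bar>Y 0\<bar> / s < Q^N" using real_arch_pow[of Q] by (auto simp: Q_def)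
  obtain m where m: "P m" "cnt P m \<ge> N" using cnt_big[OF inf] by blast
  have "Q^N \<le> Q^(cnt P m)" using m by (intro power_increasing) (auto simp: Q_def)
  then have "(1/2) * Q^N \<le> \<bar>Y m\<bar> * Q^(cnt P m)" using m(1) unfolding P_def
    by (intro mult_mono) (auto simp: Q_def)
  also have "\<dots> \<le> (\<Prod>k<m. exp (X k)) * \<bar>Y 0\<bar>" by (rule key)
  also have "\<dots> \<le> 24/s * \<bar>Y 0\<bar>" using B[of m] by (intro mult_right_mono) auto
  finally have "Q^N \<le> 48 * \<bar>Y 0\<bar> / s" by (simp add: field_simps)
  then show False using N by simp
qed



theorem mainTheorem8:
  fixes U V :: "complex set"
  assumes "open U" and "U \<noteq> {}" and "open V" and "V \<noteq> {}"
  shows "\<exists>n::nat. ((exp :: complex \<Rightarrow> complex) ^^ n) ` U \<inter> V \<noteq> {}"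
proof -
  obtain a where "a \<in> U" using assms(2) by blast
  then obtain s where s: "s > 0" "ball a s \<subseteq> U" using assms(1) openE by blast
  obtain v0 where "v0 \<in> V" using assms(4) by blast
  then obtain e where e: "e > 0" "ball v0 e \<subseteq> V" using assms(3) openE by blast
  define v where "v = (if v0 = 0 then of_real (e/2) else v0)"
  have v0: "v \<noteq> 0" using e by (simp add: v_def)
  have vV: "v \<in> V" using e \<open>v0 \<in> V\<close> by (auto simp: v_def dist_norm)
  obtain m w where w: "w \<in> ball a s" "Im ((exp^^m) w) = 0" using hits_real[OF s(1)] by blast
  define x0 where "x0 = Re ((exp^^m) w)"
  have wx: "(exp^^m) w = of_real x0" using w(2) by (simp add: x0_def complex_eq_iff)
  have "open ((exp^^m) ` ball a s)" by (rule open_iter) simp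
  moreover have "of_real x0 \<in> (exp^^m) ` ball a s" using w(1) wx by (metis image_eqI)
  ultimately obtain r where r: "r > 0" "ball (of_real x0) r \<subseteq> (exp^^m) ` ball a s"
    using openE by blast
  obtain n where "v \<in> (exp^^n) ` ball (of_real x0) r" using from_real[OF v0 r(1)] by blast
  also have "\<dots> \<subseteq> (exp^^n) ` (exp^^m) ` ball a s" using r(2) by (intro image_mono)
  also have "\<dots> = (exp^^(n+m)) ` ball a s" by (simp add: funpow_add image_comp)
  also have "\<dots> \<subseteq> (exp^^(n+m)) ` U" using s(2) by (intro image_mono)
  finally show ?thesis using vV by blast
qed

end
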